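(* Let $0<q<p<\infty$. Then there is no $q$-reverse Carleson measure for $H^p(\mathbb{D})$; that is, there is no finite positive Borel measure $\mu$ on $\overline{\mathbb{D}}$ and constant $C>0$ such that $\|f\|_{H^p}\le C\|f\|_{L^q(\overline{\mathbb{D}},\mu)}$ for all $f\in H^p(\mathbb{D})\cap C(\overline{\mathbb{D}})$.
   Context: $H^p=H^p(\mathbb{D})$ ($0<p<\infty$) is the space of holomorphic $f$ on the unit disc $\mathbb{D}$ with $\|f\|_{H^p}^p=\sup_{0<r<1}\int_0^1|f(re^{2\pi it})|^p\,dt<\infty$. *)

theory Defs
  imports "HOL-Analysis.Analysis"
begin

definition Hp_integral_mean :: "real \<Rightarrow> (complex \<Rightarrow> complex) \<Rightarrow> real \<Rightarrow> real" where
  "Hp_integral_mean p f r =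
     (LINT t:{0..1}|lborel. norm (f (complex_of_real r * exp (2 * pi * \<i> * complex_of_real t))) powr p)"

definition Hp_norm :: "real \<Rightarrow> (complex \<Rightarrow> complex) \<Rightarrow> real" where
  "Hp_norm p f = (SUP r\<in>{0<..<1}. Hp_integral_mean p f r) powr (1 / p)"

definition Lq_norm :: "real \<Rightarrow> complex measure \<Rightarrow> (complex \<Rightarrow> complex) \<Rightarrow> real" where
  "Lq_norm q \<mu> f = (LINT z|\<mu>. norm (f z) powr q) powr (1 / q)"

end

theory Submission imports Defs "HOL-Real_Asymp.Real_Asymp" begin

lemma normg: "norm (exp (complex_of_real M * (cnj a * z - 1))) powr p = exp (p * (M * (Re (cnj a * z) - 1)))"
  by (simp add: exp_powr_real mult.commute)

lemma Re_rot: "Re (cnj (cis \<theta>) * (complex_of_real r * exp (2 * pi * \<i> * complex_of_real t))) = r * cos (2*pi*t - \<theta>)"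
proof -
  have "exp (2 * pi * \<i> * complex_of_real t) = cis (2*pi*t)"
    by (simp add: cis_conv_exp mult_ac)
  then show ?thesis by (simp add: cos_diff algebra_simps)
qed

lemma cos_lb: "1 - x^2/2 \<le> cos (x::real)"
proof -
  have "cos x = 1 - 2 * (sin (x/2))^2" using cos_double_sin[of "x/2"] by simp
  moreover have "(sin (x/2))^2 \<le> (x/2)^2"
    using abs_sin_x_le_abs_x[of "x/2"] by (metis abs_ge_zero power2_abs power_mono)
  ultimately show ?thesis by (simp add: power_divide)
qed

lemma Lq_bound:
  fixes \<mu> :: "complex measure" and a :: complex
  assumes fm: "finite_measure \<mu>" and sets: "sets \<mu> = sets (restrict_space borel (cball 0 1))"
    and a: "norm a = 1" and M: "M > 0" and q: "q > 0" and d: "\<delta> > 0"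
  shows "(LINT z|\<mu>. norm (exp (complex_of_real M * (cnj a * z - 1))) powr q)
     \<le> measure \<mu> (cball 0 1 \<inter> ball a \<delta>) + measure \<mu> (space \<mu>) * exp (-(q*M*\<delta>^2/2))"
proof -
  interpret finite_measure \<mu> by (rule fm)
  define h where "h z = norm (exp (complex_of_real M * (cnj a * z - 1))) powr q" for z
  define U where "U = cball (0::complex) 1 \<inter> ball a \<delta>"
  define E where "E = exp (-(q*M*\<delta>^2/2))"
  have sp: "space \<mu> = cball 0 1"
    using sets_eq_imp_space_eq[OF sets] by (simp add: space_restrict_space)
  have Us: "U \<in> sets \<mu>" unfolding sets sets_restrict_space U_def by auto
  have hmeas: "h \<in> borel_measurable \<mu>"
  proof -
    have "h \<in> borel_measurable borel" unfolding h_def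
      by (intro borel_measurable_continuous_onI continuous_intros) auto
    then have "h \<in> borel_measurable (restrict_space borel (cball 0 1))"
      by (rule measurable_restrict_space1)
    then show ?thesis using measurable_cong_sets[OF sets, of borel borel] by (metis (no_types))
  qed
  have h_eq: "h z = exp (q * (M * (Re (cnj a * z) - 1)))" for z
    unfolding h_def by (rule normg)
  have hle1: "h z \<le> 1" if "z \<in> cball 0 1" for z
  proof -
    have "Re (cnj a * z) \<le> norm (cnj a * z)" by (rule complex_Re_le_cmod)
    also have "\<dots> \<le> 1" using that a by (simp add: norm_mult)
    finally show ?thesis unfolding h_eq using q M
      by (simp add: mult_nonneg_nonpos)
  qed
  have hint: "integrable \<mu> h"
  proof (rule integrable_const_bound[where B=1])
    show "AE x in \<mu>. norm (h x) \<le> 1"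
      by (rule AE_I2) (use hle1 sp in \<open>auto simp: h_def\<close>)
  qed (rule hmeas)
  have pt: "h z \<le> indicator U z + E" if z: "z \<in> space \<mu>" for z
  proof (cases "z \<in> ball a \<delta>")
    case True
    have "h z \<le> 1" using hle1 z sp by auto
    moreover have "0 < E" unfolding E_def by simp
    ultimately show ?thesis using True z sp unfolding U_def by auto
  next
    case False
    then have dz: "\<delta> \<le> norm (z - a)" by (simp add: dist_norm norm_minus_commute)
    have "(norm (z - a))^2 = (norm z)^2 + 1 - 2 * Re (cnj a * z)"
    proof -
      have a2: "(Re a)^2 + (Im a)^2 = 1" using a cmod_power2[of a] by simp
      show ?thesis unfolding cmod_power2 using a2 by (simp add: power2_eq_square algebra_simps)
    qed
    moreover have "(norm z)^2 \<le> 1" using z sp by (simp add: abs_square_le_1)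
    moreover have "\<delta>^2 \<le> (norm (z - a))^2" using dz d by (simp add: power_mono)
    ultimately have "Re (cnj a * z) - 1 \<le> - (\<delta>^2/2)" by simp
    then have "q * (M * (Re (cnj a * z) - 1)) \<le> q * (M * (- (\<delta>^2/2)))"
      using q M by (intro mult_left_mono) auto
    then have "h z \<le> E" unfolding h_eq E_def by simp
    moreover have "0 \<le> (indicator U z :: real)" by simp
    ultimately show ?thesis by linarith
  qed
  have "(LINT z|\<mu>. h z) \<le> (LINT z|\<mu>. indicator U z + E)"
    by (rule integral_mono[OF hint _ pt]) (use Us in \<open>auto intro!: Bochner_Integration.integrable_add simp: less_top[symmetric]\<close>)
  also have "\<dots> = measure \<mu> U + measure \<mu> (space \<mu>) * E"
  proof -
    have "(LINT z|\<mu>. indicator U z + E) = (LINT z|\<mu>. indicator U z) + (LINT z|\<mu>. E)"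
      by (rule Bochner_Integration.integral_add) (use Us in \<open>auto simp: less_top[symmetric]\<close>)
    then show ?thesis using Us by (simp add: Int_absorb2 sets.sets_into_space)
  qed
  finally show ?thesis unfolding h_def U_def E_def .
qed

lemma Hp_lower:
  fixes p M \<theta> :: real
  assumes p: "p > 0" and M: "M > 0" and pM: "p * M \<ge> 1" and th: "0 \<le> \<theta>" "\<theta> \<le> pi/2"
  shows "(exp (-1) * (1 / (2*pi * sqrt (p*M)))) powr (1/p)
          \<le> Hp_norm p (\<lambda>z. exp (complex_of_real M * (cnj (cis \<theta>) * z - 1)))"
proof -
  define g where "g = (\<lambda>z. exp (complex_of_real M * (cnj (cis \<theta>) * z - 1)))"
  define F where "F r t = exp (p * (M * (r * cos (2*pi*t - \<theta>) - 1)))" for r t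
  have mean: "Hp_integral_mean p g r = integral {0..1} (F r)" for r
  proof -
    have "Hp_integral_mean p g r = (LINT t:{0..1}|lborel. F r t)"
      unfolding Hp_integral_mean_def g_def F_def by (simp only: normg Re_rot)
    also have "\<dots> = integral {0..1} (F r)"
      by (rule set_borel_integral_eq_integral(2), rule borel_integrable_atLeastAtMost')
         (unfold F_def, intro continuous_intros)
    finally show ?thesis .
  qed
  have Fint: "F r integrable_on {a..b}" for r a b
    unfolding F_def by (intro integrable_continuous_interval continuous_intros)
  have Fnn: "0 \<le> F r t" for r t unfolding F_def by simp
  have bdd: "bdd_above ((Hp_integral_mean p g) ` {0<..<1})"
  proof (rule bdd_aboveI2)
    fix r :: real assume r: "r \<in> {0<..<1}"
    have Fle: "F r t \<le> 1" for t
    proof -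
      have r1: "r < 1" "0 < r" using r by auto
      have "r * cos (2*pi*t - \<theta>) \<le> r" using r1 by (intro mult_left_le) auto
      then have "r * cos (2*pi*t - \<theta>) - 1 \<le> 0" using r1 by linarith
      then have "M * (r * cos (2*pi*t - \<theta>) - 1) \<le> 0" using M by (simp add: mult_nonneg_nonpos)
      then show ?thesis unfolding F_def using p by (simp add: mult_nonneg_nonpos)
    qed
    have "integral {0..1} (F r) \<le> integral {0..1} (\<lambda>_::real. 1::real)"
      apply (rule Henstock_Kurzweil_Integration.integral_le)
      using Fint Fle by auto
    then show "Hp_integral_mean p g r \<le> 1" by (simp add: mean)
  qed
  define e where "e = 1 / (2*p*M)"
  define r0 where "r0 = 1 - e"
  define t0 where "t0 = \<theta> / (2*pi)"
  define \<eta> where "\<eta> = 1 / (2*pi * sqrt (p*M))"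
  have e: "0 < e" "e \<le> 1/2" using p M pM unfolding e_def by (auto simp: field_simps)
  have r0: "r0 \<in> {0<..<1}" using e unfolding r0_def by auto
  have sq: "sqrt (p*M) \<ge> 1" using pM by simp
  have eta: "0 < \<eta>" "\<eta> \<le> 1/(2*pi)" using sq unfolding \<eta>_def by (auto simp: field_simps)
  have t0: "0 \<le> t0" "t0 \<le> 1/4" using th unfolding t0_def by (auto simp: field_simps)
  have "1/(2*pi) \<le> 3/4" using pi_gt3 by (simp add: field_simps)
  then have sub: "{t0..t0+\<eta>} \<subseteq> {0..1}" using eta t0 by auto
  have lb: "exp (-1) \<le> F r0 t" if t: "t \<in> {t0..t0+\<eta>}" for t
  proof -
    define x where "x = 2*pi*t - \<theta>"
    have x0: "0 \<le> x" using t unfolding x_def t0_def by (auto simp: field_simps)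
    have "x \<le> 2*pi*\<eta>" using t unfolding x_def t0_def by (auto simp: field_simps)
    also have "2*pi*\<eta> = 1 / sqrt (p*M)" unfolding \<eta>_def by simp
    finally have "x^2 \<le> (1 / sqrt (p*M))^2" using x0 by (intro power_mono) auto
    also have "\<dots> = 1/(p*M)" using p M by (simp add: power_divide)
    finally have "x^2/2 \<le> e" unfolding e_def by (simp add: field_simps)
    then have c1: "1 - e \<le> cos x" using cos_lb[of x] by linarith
    have c2: "cos x \<le> 1" by simp
    have "e * cos x \<le> e * 1" using e c2 by (intro mult_left_mono) auto
    then have "r0 * cos x - 1 \<ge> -2*e" using c1 unfolding r0_def by (simp add: algebra_simps)
    then have "p*M*(r0 * cos x - 1) \<ge> p*M*(-2*e)" using p M by (intro mult_left_mono) auto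
    also have "p*M*(-2*e) = -1" unfolding e_def using p M by (simp add: field_simps)
    finally show ?thesis unfolding F_def x_def by (simp add: mult_ac)
  qed
  have "exp (-1) * \<eta> = integral {t0..t0+\<eta>} (\<lambda>_::real. exp (-1))" using eta by simp
  also have "\<dots> \<le> integral {t0..t0+\<eta>} (F r0)"
    apply (rule Henstock_Kurzweil_Integration.integral_le)
    using Fint lb by auto
  also have "\<dots> \<le> integral {0..1} (F r0)"
    by (intro integral_subset_le sub Fint) (auto simp: Fnn)
  also have "\<dots> = Hp_integral_mean p g r0" by (simp add: mean)
  also have "\<dots> \<le> (SUP r\<in>{0<..<1}. Hp_integral_mean p g r)"
    by (rule cSUP_upper[OF r0 bdd])
  finally have "(exp (-1) * \<eta>) powr (1/p) \<le> (SUP r\<in>{0<..<1}. Hp_integral_mean p g r) powr (1/p)"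
    using eta p by (intro powr_mono2) auto
  then show ?thesis unfolding Hp_norm_def g_def \<eta>_def .
qed

lemma asym:
  fixes K q s p :: real
  assumes "K > 0" "q > 0" "s > 1" "p > 0"
  shows "eventually (\<lambda>x. K * (1/x + exp(-q*x powr (s-1)/8)) powr s < exp(-1) * (1/(2*pi * sqrt(p * x powr (1+s))))
           \<and> 1 \<le> x \<and> 1 \<le> p * x powr (1+s)) at_top"
proof -
  have 1: "eventually (\<lambda>x. K * (1/x + exp(-q*x powr (s-1)/8)) powr s < exp(-1) * (1/(2*pi * sqrt(p * x powr (1+s))))) at_top"
    using assms by real_asymp
  have 2: "eventually (\<lambda>x::real. 1 \<le> x) at_top" by real_asymp
  have 3: "eventually (\<lambda>x. 1 \<le> p * x powr (1+s)) at_top" using assms by real_asymp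
  show ?thesis using 1 2 3 by eventually_elim auto
qed

theorem theorem3p4:
  fixes p q :: real
  assumes "0 < q" and "q < p"
  shows "\<not> (\<exists>(\<mu>::complex measure) (C::real).
            finite_measure \<mu> \<and> sets \<mu> = sets (restrict_space borel (cball 0 1)) \<and> C > 0 \<and>
            (\<forall>f. f holomorphic_on ball 0 1 \<and> continuous_on (cball 0 1) f \<longrightarrow>
                 Hp_norm p f \<le> C * Lq_norm q \<mu> f))"
proof
  assume "\<exists>(\<mu>::complex measure) (C::real).
            finite_measure \<mu> \<and> sets \<mu> = sets (restrict_space borel (cball 0 1)) \<and> C > 0 \<and>
            (\<forall>f. f holomorphic_on ball 0 1 \<and> continuous_on (cball 0 1) f \<longrightarrow>
                 Hp_norm p f \<le> C * Lq_norm q \<mu> f)"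
  then obtain \<mu> :: "complex measure" and C :: real where fm: "finite_measure \<mu>"
    and sets: "sets \<mu> = sets (restrict_space borel (cball 0 1))" and C: "C > 0"
    and ineq: "\<And>f. f holomorphic_on ball 0 1 \<Longrightarrow> continuous_on (cball 0 1) f \<Longrightarrow>
                 Hp_norm p f \<le> C * Lq_norm q \<mu> f" by blast
  interpret finite_measure \<mu> by (rule fm)
  have q: "q > 0" and p: "p > 0" using assms by auto
  define m where "m = measure \<mu> (space \<mu>)"
  have m0: "0 \<le> m" unfolding m_def by simp
  define s where "s = p / q"
  have s1: "s > 1" unfolding s_def using assms by simp
  define K where "K = C powr p * (m+1) powr s"
  have K: "K > 0" unfolding K_def using C m0 by simp
  obtain x0 where x0: "\<And>x. x \<ge> x0 \<Longrightarrow> K * (1/x + exp(-q*x powr (s-1)/8)) powr s < exp(-1) * (1/(2*pi * sqrt(p * x powr (1+s))))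
           \<and> 1 \<le> x \<and> 1 \<le> p * x powr (1+s)"
    using asym[OF K q s1 p] unfolding eventually_at_top_linorder by blast
  define N :: nat where "N = nat \<lceil>x0\<rceil>"
  have "real N \<ge> x0" unfolding N_def by linarith
  note X = x0[OF this]
  have N1: "real N \<ge> 1" and pM: "1 \<le> p * real N powr (1+s)" using X by auto
  have Npos: "N > 0" using N1 by simp
  define M where "M = real N powr (1+s)"
  have Mpos: "M > 0" unfolding M_def using N1 by simp
  define \<delta> where "\<delta> = 1 / (2 * real N)"
  have d: "\<delta> > 0" unfolding \<delta>_def using N1 by simp
  define \<theta> where "\<theta> k = arccos (real k / real N)" for k :: nat
  define a where "a k = cis (\<theta> k)" for k
  define U where "U k = cball (0::complex) 1 \<inter> ball (a k) \<delta>" for k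
  have Re_a: "Re (a k) = real k / real N" if "k < N" for k
    unfolding a_def \<theta>_def using that Npos by (simp add: field_simps)
  have Us: "U k \<in> sets \<mu>" for k unfolding sets sets_restrict_space U_def by auto
  have disj: "disjoint_family_on U {..<N}"
  unfolding disjoint_family_on_def
  proof (intro ballI impI)
    fix j k assume jk: "j \<in> {..<N}" "k \<in> {..<N}" "j \<noteq> k"
    show "U j \<inter> U k = {}"
    proof (rule ccontr)
      assume "U j \<inter> U k \<noteq> {}"
      then obtain z where z: "dist (a j) z < \<delta>" "dist (a k) z < \<delta>" unfolding U_def by auto
      have "dist (a j) (a k) \<le> dist (a j) z + dist (a k) z" by (rule dist_triangle2)
      also have "\<dots> < 2 * \<delta>" using z by simp
      also have "\<dots> = 1 / real N" unfolding \<delta>_def by simp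
      finally have lt: "norm (a j - a k) < 1 / real N" by (simp add: dist_norm)
      have "\<bar>Re (a j - a k)\<bar> = \<bar>real j - real k\<bar> / real N"
        using Re_a jk by (simp add: diff_divide_distrib[symmetric] abs_divide)
      moreover have "\<bar>real j - real k\<bar> \<ge> 1" using jk by linarith
      ultimately have "\<bar>Re (a j - a k)\<bar> \<ge> 1 / real N" using Npos by (simp add: divide_right_mono)
      then show False using lt abs_Re_le_cmod[of "a j - a k"] by linarith
    qed
  qed
  have "(\<Sum>k<N. measure \<mu> (U k)) = measure \<mu> (\<Union>k<N. U k)"
    by (rule finite_measure_finite_Union[symmetric]) (use Us disj in auto)
  also have "\<dots> \<le> m" unfolding m_def by (rule bounded_measure)
  finally have sumle: "(\<Sum>k<N. measure \<mu> (U k)) \<le> m" .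
  obtain k where k: "k < N" "measure \<mu> (U k) \<le> m / real N"
  proof (rule ccontr)
    assume "\<not> thesis"
    then have gt: "\<And>k. k < N \<Longrightarrow> m / real N < measure \<mu> (U k)" using that by force
    have "(\<Sum>k<N. m / real N) < (\<Sum>k<N. measure \<mu> (U k))"
      by (rule sum_strict_mono) (use gt Npos in auto)
    then show False using sumle Npos by simp
  qed
  have kN: "0 \<le> real k / real N" "real k / real N \<le> 1" using k Npos by auto
  have th: "0 \<le> \<theta> k" "\<theta> k \<le> pi/2" unfolding \<theta>_def
    using arccos_lbound[of "real k / real N"] arccos_le_pi2[OF kN] kN by auto
  define g where "g = (\<lambda>z. exp (complex_of_real M * (cnj (cis (\<theta> k)) * z - 1)))"
  have "g holomorphic_on ball 0 1" unfolding g_def by (intro holomorphic_intros)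
  moreover have "continuous_on (cball 0 1) g" unfolding g_def by (intro continuous_intros)
  ultimately have main: "Hp_norm p g \<le> C * Lq_norm q \<mu> g" by (rule ineq)
  have lower: "(exp (-1) * (1 / (2*pi * sqrt (p*M)))) powr (1/p) \<le> Hp_norm p g"
    unfolding g_def by (rule Hp_lower[OF p Mpos _ th]) (use pM in \<open>simp add: M_def\<close>)
  define E where "E = exp(-q*real N powr (s-1)/8)"
  have Eeq: "exp (-(q*M*\<delta>^2/2)) = E"
  proof -
    have Np: "real N > 0" using N1 by simp
    have "real N powr (1+s) = real N powr (s-1) * real N powr 2"
      by (subst powr_add[symmetric]) simp
    also have "real N powr 2 = real N ^ 2" using Np by (simp add: powr_numeral)
    finally have "M * \<delta>^2 = real N powr (s-1) * (real N)^2 * (1 / (2 * real N))^2"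
      unfolding M_def \<delta>_def by simp
    also have "\<dots> = real N powr (s-1) / 4" using Np by (simp add: power_divide field_simps)
    finally have *: "M * \<delta>^2 = real N powr (s-1) / 4" .
    have "q*M*\<delta>^2/2 = q * (M * \<delta>^2) / 2" by simp
    also have "\<dots> = q * real N powr (s-1) / 8" unfolding * by simp
    finally show ?thesis unfolding E_def by simp
  qed
  have an: "norm (a k) = 1" unfolding a_def by simp
  have I: "(LINT z|\<mu>. norm (g z) powr q) \<le> measure \<mu> (U k) + m * E"
    using Lq_bound[OF fm sets an Mpos q d] unfolding g_def U_def m_def Eeq a_def .
  have E0: "0 \<le> E" unfolding E_def by simp
  have "(LINT z|\<mu>. norm (g z) powr q) \<le> (m+1) * (1/real N + E)"
  proof -
    have "measure \<mu> (U k) + m * E \<le> m / real N + m * E" using k by simp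
    also have "\<dots> = m * (1/real N + E)" by (simp add: algebra_simps)
    also have "\<dots> \<le> (m+1) * (1/real N + E)" using E0 Npos by (intro mult_right_mono) auto
    finally show ?thesis using I by linarith
  qed
  then have Lq: "Lq_norm q \<mu> g \<le> ((m+1) * (1/real N + E)) powr (1/q)"
    unfolding Lq_norm_def using q by (intro powr_mono2) (auto intro: integral_nonneg_AE)
  define L where "L = exp (-1) * (1 / (2*pi * sqrt (p*M)))"
  have L0: "0 \<le> L" unfolding L_def using p Mpos by simp
  define Y where "Y = (m+1) * (1/real N + E)"
  have Y0: "0 \<le> Y" unfolding Y_def using m0 E0 by simp
  have "L powr (1/p) \<le> C * Y powr (1/q)"
  proof -
    have "C * Lq_norm q \<mu> g \<le> C * Y powr (1/q)"
      using Lq C unfolding Y_def by (intro mult_left_mono) auto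
    then show ?thesis using lower main unfolding L_def by linarith
  qed
  then have "(L powr (1/p)) powr p \<le> (C * Y powr (1/q)) powr p"
    using p by (intro powr_mono2) auto
  also have "(L powr (1/p)) powr p = L" using p L0 by (simp add: powr_powr)
  also have "(C * Y powr (1/q)) powr p = C powr p * Y powr s"
    using C Y0 p q by (simp add: powr_mult powr_powr s_def)
  also have "Y powr s = (m+1) powr s * (1/real N + E) powr s"
    unfolding Y_def using m0 E0 by (simp add: powr_mult)
  finally have "L \<le> K * (1/real N + E) powr s" unfolding K_def by (simp add: mult_ac)
  moreover have "K * (1/real N + E) powr s < L"
    using X unfolding L_def E_def M_def by simp
  ultimately show False by simp
qed

end
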